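(* Let $A$ be a finite alphabet. If $d: A^n \to A$ is a weakly progressive block map, then the induced sliding block code $\tau_d: A^{\mathbb{N}} \to A^{\mathbb{N}}$ is a local homeomorphism.
   Context: $A$ is a finite set with the discrete topology; $\mathbb{N}=\{1,2,3,\dots\}$; $A^{\mathbb{N}}$ is the space of one-sided infinite sequences over $A$ with the product topology; $A^k$ is the set of words of length $k$. A block map is a function $d: A^n \to A$, and the induced sliding block code $\tau_d: A^{\mathbb{N}}\to A^{\mathbb{N}}$ is defined by $\tau_d(x)_i = d(x_i \cdots x_{i+n-1})$. For $w=w_1\cdots w_{n-1}\in A^{n-1}$ and $m\in\mathbb{N}$, define $p_{d,m}^{w}: A^m\to A^m$ by letting, for $\beta\in A^m$, the $j$-th letter ($1\le j\le m$) of $p_{d,m}^{w}(\beta)$ be $d$ applied to the subword of length $n$ starting at position $j$ of the concatenated word $w\beta$ (so $p_{d,m}^{w}(a\alpha)=d(w_1\cdots w_{n-1}a)\,d(w_2\cdots w_{n-1}a\alpha_1)\cdots$). The block map $d$ is weakly progressive of order $m$ if for every $\mu \in A^n$ and every $\nu \in A^m$ with $d(\mu)= \nu_1$ there exists a unique $a \in A$ such that the equation $p_{d,m}^{\mu_1 \cdots \mu_{n-1}}(a \alpha)=\nu$ has a solution $\alpha \in A^{m-1}$; $d$ is weakly progressive if it is weakly progressive of order $m$ for some $m$. A continuous map $f:X\to Y$ is a local homeomorphism if every $x\in X$ has an open neighborhood $U$ such that $f(U)$ is open in $Y$ and $f:U\to f(U)$ is a homeomorphism. *)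

theory Defs
  imports "HOL-Analysis.Analysis"
begin

definition words :: "'a set \<Rightarrow> nat \<Rightarrow> 'a list set" where
  "words A k = {w. length w = k \<and> set w \<subseteq> A}"

text \<open>The full shift A^N with the product of discrete topologies.
  Positions are indexed by nat starting at 0 (the paper uses 1,2,3,...).\<close>
definition full_shift :: "'a set \<Rightarrow> (nat \<Rightarrow> 'a) topology" where
  "full_shift A = product_topology (\<lambda>_. discrete_topology A) UNIV"

definition sliding_block_code :: "nat \<Rightarrow> ('a list \<Rightarrow> 'a) \<Rightarrow> (nat \<Rightarrow> 'a) \<Rightarrow> (nat \<Rightarrow> 'a)" where
  "sliding_block_code n d x = (\<lambda>i. d (map x [i..<i+n]))"

definition p_map :: "nat \<Rightarrow> ('a list \<Rightarrow> 'a) \<Rightarrow> nat \<Rightarrow> 'a list \<Rightarrow> 'a list \<Rightarrow> 'a list" where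
  "p_map n d m w \<beta> = map (\<lambda>j. d (take n (drop j (w @ \<beta>)))) [0..<m]"

definition weakly_progressive_order :: "'a set \<Rightarrow> nat \<Rightarrow> ('a list \<Rightarrow> 'a) \<Rightarrow> nat \<Rightarrow> bool" where
  "weakly_progressive_order A n d m \<longleftrightarrow>
     (\<forall>\<mu>\<in>words A n. \<forall>\<nu>\<in>words A m. d \<mu> = hd \<nu> \<longrightarrow>
        (\<exists>!a. a \<in> A \<and> (\<exists>\<alpha>\<in>words A (m - 1). p_map n d m (take (n - 1) \<mu>) (a # \<alpha>) = \<nu>)))"

definition weakly_progressive :: "'a set \<Rightarrow> nat \<Rightarrow> ('a list \<Rightarrow> 'a) \<Rightarrow> bool" where
  "weakly_progressive A n d \<longleftrightarrow> (\<exists>m\<ge>1. weakly_progressive_order A n d m)"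

definition local_homeomorphism_map :: "'a topology \<Rightarrow> 'b topology \<Rightarrow> ('a \<Rightarrow> 'b) \<Rightarrow> bool" where
  "local_homeomorphism_map X Y f \<longleftrightarrow> continuous_map X Y f \<and>
     (\<forall>x\<in>topspace X. \<exists>U. openin X U \<and> x \<in> U \<and> openin Y (f ` U) \<and>
        homeomorphic_map (subtopology X U) (subtopology Y (f ` U)) f)"

end

theory Submission
  imports Defs
begin

lemma ts_full_shift: "topspace (full_shift A) = {z. \<forall>i. z i \<in> A}"
  by (auto simp: full_shift_def PiE_def extensional_def)

lemma proj_cont: "continuous_map (full_shift A) (discrete_topology A) (\<lambda>z. z i)"
  unfolding full_shift_def by (rule continuous_map_product_projection) simp

lemma cyl_eq:
  assumes "I \<noteq> {}"
  shows "{z \<in> topspace (full_shift A). \<forall>i\<in>I. z i = x i}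
     = (\<Inter>i\<in>I. {z \<in> topspace (full_shift A). z i \<in> {x i} \<inter> A})"
  using assms by (auto simp: ts_full_shift)

lemma cyl_open:
  assumes "finite I"
  shows "openin (full_shift A) {z \<in> topspace (full_shift A). \<forall>i\<in>I. z i = x i}"
proof (cases "I = {}")
  case True then show ?thesis by simp
next
  case False
  show ?thesis unfolding cyl_eq[OF False]
    by (rule openin_INT2[OF assms False], rule openin_continuous_map_preimage[OF proj_cont]) auto
qed

lemma cyl_closed:
  assumes "finite I"
  shows "closedin (full_shift A) {z \<in> topspace (full_shift A). \<forall>i\<in>I. z i = x i}"
proof (cases "I = {}")
  case True then show ?thesis by simp
next
  case False
  show ?thesis unfolding cyl_eq[OF False]
    by (rule closedin_Inter, use False in blast, clarify, rule closedin_continuous_map_preimage[OF proj_cont]) auto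
qed

lemma words_map: "(\<forall>i. z i \<in> A) \<Longrightarrow> map z [k..<k+n] \<in> words A n"
  by (auto simp: words_def)

lemma sbc_in: "\<forall>w\<in>words A n. d w \<in> A \<Longrightarrow> (\<forall>i. z i \<in> A) \<Longrightarrow> sliding_block_code n d z k \<in> A"
  by (auto simp: sliding_block_code_def words_map)

lemma sbc_cont:
  assumes "\<forall>w\<in>words A n. d w \<in> A"
  shows "continuous_map (full_shift A) (full_shift A) (sliding_block_code n d)"
proof -
  have "continuous_map (full_shift A) (discrete_topology A) (\<lambda>z. sliding_block_code n d z k)" for k
    unfolding continuous_map_def
  proof (intro conjI allI impI)
    show "(\<lambda>z. sliding_block_code n d z k) \<in> topspace (full_shift A) \<rightarrow> topspace (discrete_topology A)"
      using sbc_in[OF assms] by (auto simp: ts_full_shift)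
    fix S assume "openin (discrete_topology A) S"
    show "openin (full_shift A) {z \<in> topspace (full_shift A). sliding_block_code n d z k \<in> S}"
    proof (subst openin_subopen, intro ballI)
      fix z0 assume z0: "z0 \<in> {z \<in> topspace (full_shift A). sliding_block_code n d z k \<in> S}"
      let ?T = "{z \<in> topspace (full_shift A). \<forall>i\<in>{k..<k+n}. z i = z0 i}"
      have "?T \<subseteq> {z \<in> topspace (full_shift A). sliding_block_code n d z k \<in> S}"
      proof
        fix z assume z: "z \<in> ?T"
        then have eq: "map z [k..<k+n] = map z0 [k..<k+n]" by auto
        show "z \<in> {z \<in> topspace (full_shift A). sliding_block_code n d z k \<in> S}"
          using z z0 by (simp add: sliding_block_code_def eq)
      qed
      moreover have "z0 \<in> ?T" using z0 by auto
      ultimately show "\<exists>T. openin (full_shift A) T \<and> z0 \<in> T \<and> T \<subseteq> {z \<in> topspace (full_shift A). sliding_block_code n d z k \<in> S}"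
        using cyl_open[of "{k..<k+n}" A z0] by blast
    qed
  qed
  then show ?thesis unfolding full_shift_def[of A] continuous_map_componentwise_UNIV
    by (simp add: full_shift_def)
qed

lemma pmap_z:
  assumes "n \<ge> 1"
  shows "p_map n d m (map z [k..<k+(n-1)]) (map z [k+(n-1)..<k+(n-1)+m])
       = map (\<lambda>j. sliding_block_code n d z j) [k..<k+m]"
proof -
  have app: "map z [k..<k+(n-1)] @ map z [k+(n-1)..<k+(n-1)+m] = map z [k..<k+(n-1)+m]"
    by (metis le_add1 map_append upt_add_eq_append)
  show ?thesis unfolding p_map_def app
  proof (rule nth_equalityI)
    fix j assume "j < length (map (\<lambda>j. d (take n (drop j (map z [k..<k + (n - 1) + m])))) [0..<m])"
    then have j: "j < m" by simp
    have "take n (drop j [k..<k + (n - 1) + m]) = [k+j..<k+j+n]"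
      using j assms by (simp add: take_upt)
    then show "map (\<lambda>j. d (take n (drop j (map z [k..<k + (n - 1) + m])))) [0..<m] ! j =
         map (sliding_block_code n d z) [k..<k + m] ! j"
      using j by (simp add: sliding_block_code_def drop_map take_map add.commute add.left_commute)
  qed simp
qed

lemma hd_map_upt: "m \<ge> 1 \<Longrightarrow> hd (map g [k..<k+m]) = g k"
  by (simp add: hd_map hd_upt)

lemma uniq_step:
  assumes wp: "weakly_progressive_order A n d m" and m: "m \<ge> 1" and n: "n \<ge> 1"
    and dA: "\<forall>w\<in>words A n. d w \<in> A"
    and z: "\<forall>i. z i \<in> A" and z': "\<forall>i. z' i \<in> A"
    and eqf: "sliding_block_code n d z = sliding_block_code n d z'"
    and win: "map z [k..<k+(n-1)] = map z' [k..<k+(n-1)]"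
  shows "z (k+(n-1)) = z' (k+(n-1))"
proof -
  define w where "w = map z [k..<k+(n-1)]"
  define \<mu> where "\<mu> = map z [k..<k+n]"
  define \<nu> where "\<nu> = map (\<lambda>j. sliding_block_code n d z j) [k..<k+m]"
  have mu: "\<mu> \<in> words A n" using z by (simp add: \<mu>_def words_map)
  have nu: "\<nu> \<in> words A m" using sbc_in[OF dA] z by (auto simp: \<nu>_def words_def)
  have hd: "d \<mu> = hd \<nu>" using m by (simp add: \<mu>_def \<nu>_def hd_map_upt sliding_block_code_def)
  have tk: "take (n-1) \<mu> = w" using n by (simp add: \<mu>_def w_def take_map take_upt)
  from wp mu nu hd have ex1: "\<exists>!a. a \<in> A \<and> (\<exists>\<alpha>\<in>words A (m - 1). p_map n d m w (a # \<alpha>) = \<nu>)"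
    unfolding weakly_progressive_order_def tk[symmetric] by blast
  have cons: "map g [k+(n-1)..<k+(n-1)+m] = g (k+(n-1)) # map g [k+n..<k+(n-1)+m]" for g :: "nat \<Rightarrow> 'a"
    using m n by (simp add: upt_conv_Cons)
  have w1: "\<exists>\<alpha>\<in>words A (m - 1). p_map n d m w (z (k+(n-1)) # \<alpha>) = \<nu>"
    apply (rule bexI[of _ "map z [k+n..<k+(n-1)+m]"])
    using pmap_z[OF n, of d m z k] cons[of z] z n unfolding w_def \<nu>_def by (auto simp: words_def)
  have w2: "\<exists>\<alpha>\<in>words A (m - 1). p_map n d m w (z' (k+(n-1)) # \<alpha>) = \<nu>"
    apply (rule bexI[of _ "map z' [k+n..<k+(n-1)+m]"])
    using pmap_z[OF n, of d m z' k] cons[of z'] z' n unfolding w_def \<nu>_def win eqf by (auto simp: words_def)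
  show ?thesis using ex1 w1 w2 z z' by blast
qed

lemma inj_on_U:
  assumes wp: "weakly_progressive_order A n d m" and m: "m \<ge> 1" and n: "n \<ge> 1"
    and dA: "\<forall>w\<in>words A n. d w \<in> A"
    and z: "\<forall>i. z i \<in> A" and z': "\<forall>i. z' i \<in> A"
    and eqf: "sliding_block_code n d z = sliding_block_code n d z'"
    and st: "\<forall>i<n-1. z i = z' i"
  shows "z = z'"
proof
  fix i show "z i = z' i"
  proof (induction i rule: less_induct)
    case (less i)
    show ?case
    proof (cases "i < n - 1")
      case True then show ?thesis using st by simp
    next
      case False
      define k where "k = i - (n-1)"
      have i: "i = k + (n-1)" using False k_def by simp
      have "map z [k..<k+(n-1)] = map z' [k..<k+(n-1)]"
        using less i by simp
      from uniq_step[OF wp m n dA z z' eqf this] show ?thesis using i by simp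
    qed
  qed
qed

definition chooser :: "'a set \<Rightarrow> nat \<Rightarrow> ('a list \<Rightarrow> 'a) \<Rightarrow> nat \<Rightarrow> (nat \<Rightarrow> 'a) \<Rightarrow> nat \<Rightarrow> 'a list \<Rightarrow> 'a" where
  "chooser A n d m y k v = (SOME a. a \<in> A \<and> (\<exists>\<alpha>\<in>words A (m-1). p_map n d m v (a#\<alpha>) = map y [k..<k+m]))"

primrec win :: "'a set \<Rightarrow> nat \<Rightarrow> ('a list \<Rightarrow> 'a) \<Rightarrow> nat \<Rightarrow> (nat \<Rightarrow> 'a) \<Rightarrow> 'a list \<Rightarrow> nat \<Rightarrow> 'a list" where
  "win A n d m y w 0 = w"
| "win A n d m y w (Suc k) = drop 1 (win A n d m y w k @ [chooser A n d m y k (win A n d m y w k)])"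

lemma pmap_nth:
  assumes "length v = n - 1" "n \<ge> 1" "j < m"
  shows "p_map n d m v \<beta> ! j = d (take n (drop j (v @ \<beta>)))"
  using assms by (simp add: p_map_def)

lemma surj1:
  assumes wp: "weakly_progressive_order A n d 1" and n: "n \<ge> 1" and fin: "finite A"
    and dA: "\<forall>w\<in>words A n. d w \<in> A"
    and v: "v \<in> words A (n-1)" and c: "c \<in> A"
  shows "\<exists>b\<in>A. d (v @ [b]) = c"
proof -
  have lv: "length v = n - 1" and sv: "set v \<subseteq> A" using v by (auto simp: words_def)
  have pm: "p_map n d 1 v [a] = [d (v @ [a])]" for a
    using lv n by (simp add: p_map_def)
  have w0: "words A (1 - 1) = {[]}" by (auto simp: words_def)
  have H: "\<forall>\<mu>\<in>words A n. \<forall>\<nu>\<in>words A 1. d \<mu> = hd \<nu> \<longrightarrow>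
        (\<exists>!a. a \<in> A \<and> (\<exists>\<alpha>\<in>words A (1 - 1). p_map n d 1 (take (n - 1) \<mu>) (a # \<alpha>) = \<nu>))"
    using wp unfolding weakly_progressive_order_def .
  have inj: "inj_on (\<lambda>b. d (v @ [b])) A"
  proof (rule inj_onI)
    fix a a' assume a: "a \<in> A" and a': "a' \<in> A" and eq: "d (v @ [a]) = d (v @ [a'])"
    have mu: "v @ [a] \<in> words A n" using a sv lv n by (auto simp: words_def)
    have dmu: "d (v @ [a]) \<in> A" using dA mu by blast
    have nu: "[d (v @ [a])] \<in> words A 1" using dmu by (simp add: words_def)
    have tk: "take (n-1) (v @ [a]) = v" using lv by simp
    have hd1: "d (v @ [a]) = hd [d (v @ [a])]" by simp
    have ex0: "\<exists>!b. b \<in> A \<and> (\<exists>\<alpha>\<in>words A (1 - 1). p_map n d 1 (take (n-1) (v @ [a])) (b # \<alpha>) = [d (v @ [a])])"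
      using H mu nu hd1 by blast
    have ex: "\<exists>!b. b \<in> A \<and> (\<exists>\<alpha>\<in>words A (1 - 1). p_map n d 1 v (b # \<alpha>) = [d (v @ [a])])"
      using ex0 unfolding tk .
    have ra: "a \<in> A \<and> (\<exists>\<alpha>\<in>words A (1 - 1). p_map n d 1 v (a # \<alpha>) = [d (v @ [a])])"
      using a pm[of a] w0 by blast
    have ra': "a' \<in> A \<and> (\<exists>\<alpha>\<in>words A (1 - 1). p_map n d 1 v (a' # \<alpha>) = [d (v @ [a])])"
      using a' pm[of a'] w0 eq by simp
    show "a = a'" using ex ra ra' by blast
  qed
  have sub: "(\<lambda>b. d (v @ [b])) ` A \<subseteq> A"
  proof (rule image_subsetI)
    fix b assume "b \<in> A"
    then have "v @ [b] \<in> words A n" using sv lv n by (auto simp: words_def)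
    then show "d (v @ [b]) \<in> A" using dA by blast
  qed
  have "(\<lambda>b. d (v @ [b])) ` A = A" by (rule endo_inj_surj[OF fin sub inj])
  then have "c \<in> (\<lambda>b. d (v @ [b])) ` A" using c by simp
  then show ?thesis by blast
qed

lemma step:
  assumes wp: "weakly_progressive_order A n d m" and m: "m \<ge> 1" and n: "n \<ge> 1"
    and y: "\<forall>i. y i \<in> A"
    and v: "v \<in> words A (n-1)" and b: "b \<in> A" and db: "d (v @ [b]) = y k"
  shows "chooser A n d m y k v \<in> A \<and>
         (\<exists>\<alpha>\<in>words A (m-1). p_map n d m v (chooser A n d m y k v # \<alpha>) = map y [k..<k+m])"
proof -
  have lv: "length v = n - 1" and sv: "set v \<subseteq> A" using v by (auto simp: words_def)
  have mu: "v @ [b] \<in> words A n" using b sv lv n by (auto simp: words_def)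
  have nu: "map y [k..<k+m] \<in> words A m" using y by (simp add: words_map)
  have hd: "d (v @ [b]) = hd (map y [k..<k+m])" using db m by (simp add: hd_map_upt)
  have tk: "take (n-1) (v @ [b]) = v" using lv by simp
  from wp mu nu hd have "\<exists>!a. a \<in> A \<and> (\<exists>\<alpha>\<in>words A (m - 1). p_map n d m (take (n-1) (v @ [b])) (a # \<alpha>) = map y [k..<k+m])"
    unfolding weakly_progressive_order_def by blast
  then have "\<exists>!a. a \<in> A \<and> (\<exists>\<alpha>\<in>words A (m - 1). p_map n d m v (a # \<alpha>) = map y [k..<k+m])"
    by (simp only: tk)
  then have "\<exists>a. a \<in> A \<and> (\<exists>\<alpha>\<in>words A (m - 1). p_map n d m v (a # \<alpha>) = map y [k..<k+m])" by blast
  from someI_ex[OF this] show ?thesis unfolding chooser_def .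
qed

lemma step2:
  assumes wp: "weakly_progressive_order A n d m" and m: "m \<ge> 1" and n: "n \<ge> 1"
    and fin: "finite A" and dA: "\<forall>w\<in>words A n. d w \<in> A"
    and y: "\<forall>i. y i \<in> A"
    and v: "v \<in> words A (n-1)" and b: "b \<in> A" and db: "d (v @ [b]) = y k"
  shows "chooser A n d m y k v \<in> A \<and> d (v @ [chooser A n d m y k v]) = y k
     \<and> drop 1 (v @ [chooser A n d m y k v]) \<in> words A (n-1)
     \<and> (\<exists>b'\<in>A. d (drop 1 (v @ [chooser A n d m y k v]) @ [b']) = y (Suc k))"
proof -
  let ?a = "chooser A n d m y k v"
  have lv: "length v = n - 1" and sv: "set v \<subseteq> A" using v by (auto simp: words_def)
  from step[OF wp m n y v b db] obtain \<alpha> where a: "?a \<in> A" and al: "\<alpha> \<in> words A (m-1)"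
    and p: "p_map n d m v (?a # \<alpha>) = map y [k..<k+m]" by blast
  have la: "length \<alpha> = m - 1" and sa: "set \<alpha> \<subseteq> A" using al by (auto simp: words_def)
  have "p_map n d m v (?a # \<alpha>) ! 0 = y k" using p m by simp
  then have d0: "d (v @ [?a]) = y k" using pmap_nth[OF lv n, of 0 m] m lv n
    by (simp add: take_Cons')
  have dw: "drop 1 (v @ [?a]) \<in> words A (n-1)" using lv sv a n
    by (auto simp: words_def dest: in_set_dropD)
  have ex: "\<exists>b'\<in>A. d (drop 1 (v @ [?a]) @ [b']) = y (Suc k)"
  proof (cases "m = 1")
    case True
    then show ?thesis using surj1[OF _ n fin dA dw y[rule_format, of "Suc k"]] wp by simp
  next
    case False
    then have m2: "m \<ge> 2" using m by simp
    then obtain c \<alpha>' where ac: "\<alpha> = c # \<alpha>'" using la by (cases \<alpha>) auto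
    have "p_map n d m v (?a # \<alpha>) ! 1 = y (Suc k)" using p m2 by simp
    moreover have "p_map n d m v (?a # \<alpha>) ! 1 = d (take n (drop 1 (v @ ?a # \<alpha>)))"
      using pmap_nth[OF lv n, of 1 m] m2 by simp
    moreover have "take n (drop 1 (v @ ?a # \<alpha>)) = drop 1 (v @ [?a]) @ [c]"
    proof -
      have "drop 1 (v @ ?a # \<alpha>) = drop 1 (v @ [?a]) @ c # \<alpha>'" using ac by (cases v) auto
      moreover have "length (drop 1 (v @ [?a])) = n - 1" using lv n by simp
      ultimately show ?thesis using n by (simp add: take_append)
    qed
    ultimately show ?thesis using sa ac by auto
  qed
  show ?thesis using a d0 dw ex by blast
qed

lemma construct:
  assumes wp: "weakly_progressive_order A n d m" and m: "m \<ge> 1" and n: "n \<ge> 1"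
    and fin: "finite A" and dA: "\<forall>w\<in>words A n. d w \<in> A"
    and y: "\<forall>i. y i \<in> A"
    and w: "w \<in> words A (n-1)" and b: "b \<in> A" and db: "d (w @ [b]) = y 0"
  shows "\<exists>z. (\<forall>i. z i \<in> A) \<and> (\<forall>i<n-1. z i = w!i) \<and> sliding_block_code n d z = y"
proof -
  let ?W = "win A n d m y w"
  have inv: "?W k \<in> words A (n-1) \<and> (\<exists>b\<in>A. d (?W k @ [b]) = y k)" for k
  proof (induction k)
    case 0 then show ?case using w b db by auto
  next
    case (Suc k)
    then obtain b where "b \<in> A" "d (?W k @ [b]) = y k" "?W k \<in> words A (n-1)" by blast
    from step2[OF wp m n fin dA y this(3,1,2)] show ?case by simp
  qed
  have ch: "chooser A n d m y k (?W k) \<in> A \<and> d (?W k @ [chooser A n d m y k (?W k)]) = y k" for k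
    using inv[of k] step2[OF wp m n fin dA y] by blast
  define z where "z i = (if i < n-1 then w!i else chooser A n d m y (i-(n-1)) (?W (i-(n-1))))" for i
  have zk: "z (k+(n-1)) = chooser A n d m y k (?W k)" for k by (simp add: z_def)
  have lw: "length w = n - 1" and sw: "set w \<subseteq> A" using w by (auto simp: words_def)
  have winz: "?W k = map z [k..<k+(n-1)]" for k
  proof (induction k)
    case 0 show ?case by (rule nth_equalityI) (auto simp: lw z_def)
  next
    case (Suc k)
    have "?W (Suc k) = drop 1 (map z [k..<k+(n-1)] @ [z (k+(n-1))])" using Suc zk by simp
    also have "\<dots> = drop 1 (map z [k..<Suc (k+(n-1))])" by simp
    also have "\<dots> = map z [Suc k..<Suc k+(n-1)]" by (simp add: drop_map)
    finally show ?case .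
  qed
  have zA: "\<forall>i. z i \<in> A"
  proof
    fix i show "z i \<in> A"
    proof (cases "i < n-1")
      case True then show ?thesis using sw lw by (auto simp: z_def)
    next
      case False
      then have "i = (i - (n-1)) + (n-1)" by simp
      then show ?thesis using zk ch by metis
    qed
  qed
  have "sliding_block_code n d z k = y k" for k
  proof -
    have "map z [k..<k+n] = map z [k..<k+(n-1)] @ [z (k+(n-1))]"
    proof -
      obtain n' where "n = Suc n'" using n by (cases n) auto
      then show ?thesis by simp
    qed
    then show ?thesis using ch[of k] winz[of k] zk[of k] by (simp add: sliding_block_code_def)
  qed
  then show ?thesis using zA by (intro exI[of _ z]) (auto simp: z_def)
qed

theorem theorem3p11:
  fixes A :: "'a set" and n :: nat and d :: "'a list \<Rightarrow> 'a"
  assumes "finite A"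
    and "n \<ge> 1"
    and "\<forall>w\<in>words A n. d w \<in> A"
    and "weakly_progressive A n d"
  shows "local_homeomorphism_map (full_shift A) (full_shift A) (sliding_block_code n d)"
proof -
  note fin = assms(1) and n = assms(2) and dA = assms(3)
  obtain m where m: "m \<ge> 1" and wp: "weakly_progressive_order A n d m"
    using assms(4) unfolding weakly_progressive_def by blast
  let ?X = "full_shift A"
  let ?f = "sliding_block_code n d"
  have cont: "continuous_map ?X ?X ?f" by (rule sbc_cont[OF dA])
  have cX: "compact_space ?X"
    unfolding full_shift_def
    by (rule compact_space_product_topology[THEN iffD2], rule disjI2, use fin in \<open>simp add: compact_space_discrete_topology\<close>)
  have hX: "Hausdorff_space ?X"
    unfolding full_shift_def
    by (rule Hausdorff_space_product_topology[THEN iffD2], rule disjI2, simp)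
  have loc: "\<exists>U. openin ?X U \<and> x \<in> U \<and> openin ?X (?f ` U) \<and>
        homeomorphic_map (subtopology ?X U) (subtopology ?X (?f ` U)) ?f"
    if x: "x \<in> topspace ?X" for x
  proof -
    define w where "w = map x [0..<n-1]"
    define U where "U = {z \<in> topspace ?X. \<forall>i\<in>{..<n-1}. z i = x i}"
    define V where "V = {y \<in> topspace ?X. y 0 \<in> (\<lambda>b. d (w @ [b])) ` A}"
    have xA: "\<forall>i. x i \<in> A" using x by (simp add: ts_full_shift)
    have wA: "w \<in> words A (n-1)" using xA by (auto simp: w_def words_def)
    have oU: "openin ?X U" unfolding U_def by (rule cyl_open) simp
    have cU: "closedin ?X U" unfolding U_def by (rule cyl_closed) simp
    have xU: "x \<in> U" using x by (simp add: U_def)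
    have fU: "?f ` U = V"
    proof
      show "?f ` U \<subseteq> V"
      proof
        fix y assume "y \<in> ?f ` U"
        then obtain z where z: "z \<in> U" and y: "y = ?f z" by blast
        have zA: "\<forall>i. z i \<in> A" using z by (simp add: U_def ts_full_shift)
        have yt: "y \<in> topspace ?X" using y zA sbc_in[OF dA] by (simp add: ts_full_shift)
        obtain n' where n': "n = Suc n'" using n by (cases n) auto
        have "map z [0..<n] = map z [0..<n-1] @ [z (n-1)]" using n' by simp
        moreover have "map z [0..<n-1] = w" using z by (auto simp: U_def w_def)
        ultimately have "y 0 = d (w @ [z (n-1)])" using y by (simp add: sliding_block_code_def)
        then show "y \<in> V" using yt zA by (auto simp: V_def)
      qed
    next
      show "V \<subseteq> ?f ` U"
      proof
        fix y assume "y \<in> V"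
        then obtain b where yA: "\<forall>i. y i \<in> A" and b: "b \<in> A" and db: "d (w @ [b]) = y 0"
          by (auto simp: V_def ts_full_shift)
        from construct[OF wp m n fin dA yA wA b db] obtain z where
          zA: "\<forall>i. z i \<in> A" and zw: "\<forall>i<n-1. z i = w!i" and fz: "?f z = y" by blast
        have "z \<in> U" using zA zw by (auto simp: U_def ts_full_shift w_def)
        then show "y \<in> ?f ` U" using fz by blast
      qed
    qed
    have oV: "openin ?X V"
    proof -
      have "openin ?X {y \<in> topspace ?X. y 0 \<in> (\<lambda>b. d (w @ [b])) ` A}"
      proof (rule openin_continuous_map_preimage[OF proj_cont])
        show "openin (discrete_topology A) ((\<lambda>b. d (w @ [b])) ` A)"
      proof -
        have "(\<lambda>b. d (w @ [b])) ` A \<subseteq> A"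
        proof (rule image_subsetI)
          fix b assume "b \<in> A"
          then have "w @ [b] \<in> words A n" using wA n by (auto simp: words_def)
          then show "d (w @ [b]) \<in> A" using dA by blast
        qed
        then show ?thesis by (simp only: openin_discrete_topology)
      qed
      qed
      then show ?thesis by (simp add: V_def)
    qed
    have homeo: "homeomorphic_map (subtopology ?X U) (subtopology ?X (?f ` U)) ?f"
    proof (rule continuous_imp_homeomorphic_map)
      show "continuous_map (subtopology ?X U) (subtopology ?X (?f ` U)) ?f"
      proof (rule continuous_map_in_subtopology[THEN iffD2], rule conjI)
        show "continuous_map (subtopology ?X U) ?X ?f" by (rule continuous_map_from_subtopology[OF cont])
        show "?f \<in> topspace (subtopology ?X U) \<rightarrow> ?f ` U" by (simp add: topspace_subtopology)
      qed
      show "compact_space (subtopology ?X U)"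
        by (rule compact_space_subtopology, rule closedin_compact_space[OF cX cU])
      show "Hausdorff_space (subtopology ?X (?f ` U))"
        by (rule Hausdorff_space_subtopology[OF hX])
      have Ut: "U \<subseteq> topspace ?X" using openin_subset[OF oU] .
      have fUt: "?f ` U \<subseteq> topspace ?X" unfolding fU by (rule openin_subset[OF oV])
      have e1: "topspace (subtopology ?X U) = U" using Ut by (simp add: topspace_subtopology inf.absorb2)
      have e2: "topspace (subtopology ?X (?f ` U)) = ?f ` U" using fUt by (simp add: topspace_subtopology inf.absorb2)
      show "?f ` topspace (subtopology ?X U) = topspace (subtopology ?X (?f ` U))"
        unfolding e1 e2 ..
      show "inj_on ?f (topspace (subtopology ?X U))"
      proof (rule inj_onI)
        fix z z' assume z: "z \<in> topspace (subtopology ?X U)" and z': "z' \<in> topspace (subtopology ?X U)"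
          and eq: "?f z = ?f z'"
        have zA: "\<forall>i. z i \<in> A" "\<forall>i. z' i \<in> A" using z z' Ut by (auto simp: ts_full_shift)
        have st: "\<forall>i<n-1. z i = z' i" using z z' by (auto simp: U_def)
        show "z = z'" by (rule inj_on_U[OF wp m n dA zA eq st])
      qed
    qed
    show ?thesis using oU xU oV fU homeo by auto
  qed
  show ?thesis unfolding local_homeomorphism_map_def using cont loc by blast
qed

end
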